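(* Let $p$ and $q=p+2$ be odd primes and $y_{pq}$ the Golomb sequence. Then its $p\times q$ finite Zak transform $X_q\{y_{pq}\}(j,k)=\sum_{r=0}^{q-1}y_{pq}(k+rp)e^{2\pi i rj/q}$ ($0\le j<q$, $0\le k<p$) is $$X_q\{y_{pq}\}(j,k)=\begin{cases}1-\alpha+\alpha q,& j=k=0,\\ \frac{(1-\alpha)(q+1)}{2}+\alpha q,& j=0,\ k\ne0,\\ 1-\alpha,& k=0,\ j\neq0,\\ \frac{1-\alpha}{2}\,A\,e^{-2\pi i\frac{p^{-1}kj}{q}},& j\ne0,\ k\ne0,\end{cases}$$ where $A=1+c_q\left(\frac{p}{q}\right)\left(\frac{k}{p}\right)\left(\frac{j}{q}\right)$, $p^{-1}$ is the inverse of $p$ modulo $q$, and $c_q=\sqrt q$ if $q\equiv1\pmod 4$, $c_q=i\sqrt q$ if $q\equiv3\pmod4$.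
   Context: Legendre/Jacobi symbols $\left(\frac{a}{M}\right)$ are zero when $\gcd(a,M)>1$. The modified Jacobi sequence $x_{pq}$ on $\mathbb{Z}/pq$ (extended periodically) is: $x_{pq}(0)=1$; $x_{pq}(n)=0$ if $p\mid n$, $q\nmid n$; $x_{pq}(n)=1$ if $q\mid n$, $p\nmid n$; for $\gcd(n,pq)=1$, $x_{pq}(n)=1$ if $\left(\frac{n}{pq}\right)=1$ and $0$ otherwise. The Golomb sequence is $y_{pq}=(1-\alpha)x_{pq}+\alpha 1_{pq}$ (value $1$ where $x_{pq}=1$ and $\alpha$ where $x_{pq}=0$), with $\alpha=e^{i\Phi}$, $\Phi=\arccos\!\left(-\frac{pq-1}{pq+1}\right)$. *)

theory Defs
  imports "HOL-Analysis.Analysis" "HOL-Number_Theory.Number_Theory"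
begin

definition jacobi_pq :: "nat \<Rightarrow> nat \<Rightarrow> int \<Rightarrow> int" where
  "jacobi_pq p q n = Legendre n (int p) * Legendre n (int q)"

definition mod_jacobi :: "nat \<Rightarrow> nat \<Rightarrow> int \<Rightarrow> complex" where
  "mod_jacobi p q n =
     (let m = n mod (int p * int q) in
      if m = 0 then 1
      else if int p dvd m \<and> \<not> int q dvd m then 0
      else if int q dvd m \<and> \<not> int p dvd m then 1
      else if jacobi_pq p q m = 1 then 1 else 0)"

definition golomb_alpha :: "nat \<Rightarrow> nat \<Rightarrow> complex" where
  "golomb_alpha p q =
     cis (arccos (- (real (p * q) - 1) / (real (p * q) + 1)))"

definition golomb :: "nat \<Rightarrow> nat \<Rightarrow> int \<Rightarrow> complex" where
  "golomb p q n = (1 - golomb_alpha p q) * mod_jacobi p q n + golomb_alpha p q"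

definition zak :: "nat \<Rightarrow> nat \<Rightarrow> (int \<Rightarrow> complex) \<Rightarrow> nat \<Rightarrow> nat \<Rightarrow> complex" where
  "zak p q y j k = (\<Sum>r<q. y (int k + int r * int p) * exp (2 * pi * \<i> * of_nat (r * j) / of_nat q))"

definition inv_mod :: "nat \<Rightarrow> nat \<Rightarrow> nat" where
  "inv_mod p q = (SOME u. u < q \<and> [p * u = 1] (mod q))"

definition c_q :: "nat \<Rightarrow> complex" where
  "c_q q = (if q mod 4 = 1 then complex_of_real (sqrt (real q))
            else \<i> * complex_of_real (sqrt (real q)))"

end

theory Submission
  imports Defs
begin

fun gb :: "complex \<Rightarrow> nat \<Rightarrow> nat \<Rightarrow> complex" where
  "gb x m 0 = 1"
| "gb x 0 (Suc k) = 0"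
| "gb x (Suc m) (Suc k) = gb x m k + x^(Suc k) * gb x m (Suc k)"

lemma gb_zero: "m < k \<Longrightarrow> gb x m k = 0"
proof (induction m arbitrary: k)
  case 0 then show ?case by (cases k) auto
next
  case (Suc m) then show ?case by (cases k) auto
qed

lemma gb_diag: "gb x m m = 1"
  by (induction m) (auto simp: gb_zero)

lemma gb_rule2: "gb x (Suc n) (Suc k) = x^(n-k) * gb x n k + gb x n (Suc k)"
proof (induction n arbitrary: k)
  case 0 then show ?case by (cases k) auto
next
  case (Suc n)
  show ?case
  proof (cases k)
    case 0
    have a: "gb x (Suc n) 1 = x^n + gb x n 1" using Suc.IH[of 0] by simp
    have b: "gb x (Suc n) 1 = 1 + x * gb x n 1" by simp
    show ?thesis using a b 0 by (simp add: algebra_simps)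
  next
    case (Suc k')
    note IH1 = Suc.IH[of k'] and IH2 = Suc.IH[of "Suc k'"]
    show ?thesis
    proof (cases "k' < n")
      case True
      then obtain d where d: "n = k' + Suc d" by (metis add_Suc_right less_imp_Suc_add)
      define A where "A = gb x n k'"
      define B where "B = gb x n (Suc k')"
      define C where "C = gb x n (Suc (Suc k'))"
      have r1: "gb x (Suc n) (Suc k') = A + x^(Suc k') * B" by (simp add: A_def B_def)
      have r2: "gb x (Suc n) (Suc (Suc k')) = B + x^(Suc (Suc k')) * C" by (simp add: B_def C_def)
      have i1: "gb x (Suc n) (Suc k') = x^(Suc d) * A + B" using IH1 d by (simp add: A_def B_def)
      have i2: "gb x (Suc n) (Suc (Suc k')) = x^d * B + C" using IH2 d by (simp add: B_def C_def)
      have l: "gb x (Suc (Suc n)) (Suc (Suc k')) = gb x (Suc n) (Suc k') + x^(Suc (Suc k')) * gb x (Suc n) (Suc (Suc k'))"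
        by simp
      have e: "Suc n - Suc k' = Suc d" using d by simp
      have "gb x (Suc (Suc n)) (Suc (Suc k')) = (x^(Suc d) * A + B) + x^(Suc (Suc k')) * (x^d * B + C)"
        by (subst l) (simp only: i1 i2)
      also have "\<dots> = x^(Suc d) * (A + x^(Suc k') * B) + (B + x^(Suc (Suc k')) * C)"
        by (simp add: algebra_simps power_add)
      also have "\<dots> = x^(Suc n - Suc k') * gb x (Suc n) (Suc k') + gb x (Suc n) (Suc (Suc k'))"
        by (simp only: e r1 r2)
      finally show ?thesis unfolding Suc .
    next
      case False
      then have "n \<le> k'" by simp
      then show ?thesis unfolding Suc
        using gb_zero[of "Suc n" "Suc (Suc k')" x] gb_zero[of n "Suc (Suc k')" x]
           gb_zero[of n "Suc k'" x]  gb_zero[of "Suc n" "Suc k'" x] IH1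
        by (cases "n = k'") (auto)
    qed
  qed
qed

definition GS :: "complex \<Rightarrow> nat \<Rightarrow> complex" where
  "GS x n = (\<Sum>k<Suc n. (-1)^k * gb x n k)"
definition US :: "complex \<Rightarrow> nat \<Rightarrow> complex" where
  "US x n = (\<Sum>k<Suc n. (-1)^k * x^k * gb x n k)"

lemma US_shift: "US x n = 1 - (\<Sum>k<Suc n. (-1)^k * x^(Suc k) * gb x n (Suc k))"
proof -
  have "US x n = 1 + (\<Sum>k<n. (-1)^(Suc k) * x^(Suc k) * gb x n (Suc k))"
    unfolding US_def by (subst sum.lessThan_Suc_shift) simp
  also have "(\<Sum>k<n. (-1)^(Suc k) * x^(Suc k) * gb x n (Suc k)) = 
     (\<Sum>k<Suc n. (-1)^(Suc k) * x^(Suc k) * gb x n (Suc k))"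
    using gb_zero[of n "Suc n" x] by simp
  also have "\<dots> = - (\<Sum>k<Suc n. (-1)^k * x^(Suc k) * gb x n (Suc k))"
    by (simp add: sum_negf[symmetric])
  finally show ?thesis by simp
qed

lemma GS_Suc: "GS x (Suc n) = - GS x n + US x n"
proof -
  have "GS x (Suc n) = 1 + (\<Sum>k<Suc n. (-1)^(Suc k) * gb x (Suc n) (Suc k))"
    unfolding GS_def by (subst sum.lessThan_Suc_shift) simp
  also have "(\<Sum>k<Suc n. (-1)^(Suc k) * gb x (Suc n) (Suc k)) =
     (\<Sum>k<Suc n. - ((-1)^k * gb x n k) - (-1)^k * x^(Suc k) * gb x n (Suc k))"
    by (intro sum.cong) (auto simp: algebra_simps)
  also have "\<dots> = - GS x n - (\<Sum>k<Suc n. (-1)^k * x^(Suc k) * gb x n (Suc k))"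
    unfolding GS_def by (simp add: sum_subtractf sum_negf)
  finally show ?thesis using US_shift[of x n] by simp
qed

lemma US_Suc: "US x (Suc n) = - (x^(Suc n) * GS x n) + US x n"
proof -
  have "US x (Suc n) = 1 + (\<Sum>k<Suc n. (-1)^(Suc k) * x^(Suc k) * gb x (Suc n) (Suc k))"
    unfolding US_def by (subst sum.lessThan_Suc_shift) simp
  also have "(\<Sum>k<Suc n. (-1)^(Suc k) * x^(Suc k) * gb x (Suc n) (Suc k)) =
     (\<Sum>k<Suc n. - (x^(Suc n) * ((-1)^k * gb x n k)) - (-1)^k * x^(Suc k) * gb x n (Suc k))"
  proof (intro sum.cong refl)
    fix k assume "k \<in> {..<Suc n}"
    then have "Suc k + (n-k) = Suc n" by simp
    then have "x^(Suc k) * x^(n-k) = x^(Suc n)" by (metis power_add)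
    then show "(-1)^(Suc k) * x^(Suc k) * gb x (Suc n) (Suc k) =
       - (x^(Suc n) * ((-1)^k * gb x n k)) - (-1)^k * x^(Suc k) * gb x n (Suc k)"
    proof -
      have "(-1)^(Suc k) * x^(Suc k) * gb x (Suc n) (Suc k) = - ((x^(Suc k) * x^(n-k)) * ((-1)^k * gb x n k)) - (-1)^k * x^(Suc k) * gb x n (Suc k)"
      proof -
        have m1: "(-1::complex)^(Suc k) = - ((-1)^k)" by simp
        have aux0: "\<And>s a c A B :: complex. (- s) * a * (c * A + B) = - ((a * c) * (s * A)) - s * a * B"
          by (simp add: algebra_simps)
        show ?thesis unfolding gb_rule2 m1 by (rule aux0)
      qed
      then show ?thesis unfolding \<open>x^(Suc k) * x^(n-k) = x^(Suc n)\<close> .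
    qed
  qed
  also have "\<dots> = - (x^(Suc n) * GS x n) - (\<Sum>k<Suc n. (-1)^k * x^(Suc k) * gb x n (Suc k))"
    unfolding GS_def sum_subtractf sum_negf sum_distrib_left by simp
  finally show ?thesis using US_shift[of x n] by simp
qed

lemma GS_rec: "GS x (Suc (Suc n)) = (1 - x^(Suc n)) * GS x n"
  using GS_Suc[of x "Suc n"] US_Suc[of x n] GS_Suc[of x n] by (simp add: algebra_simps)

lemma GS_even: "GS x (2*n) = (\<Prod>j<n. 1 - x^(2*j+1))"
proof (induction n)
  case 0 then show ?case by (simp add: GS_def)
next
  case (Suc n)
  have "GS x (2 * Suc n) = GS x (Suc (Suc (2*n)))" by simp
  then show ?case using Suc GS_rec[of x "2*n"] by (simp add: mult.commute)
qed

definition PP :: "complex \<Rightarrow> nat \<Rightarrow> complex" where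
  "PP x n = (\<Prod>j<n. 1 - x^(Suc j))"

lemma gb_prod: "k \<le> m \<Longrightarrow> gb x m k * PP x k * PP x (m - k) = PP x m"
proof (induction m arbitrary: k)
  case 0 then show ?case by (simp add: PP_def)
next
  case (Suc m)
  show ?case
  proof (cases k)
    case 0 then show ?thesis by (simp add: PP_def)
  next
    case (Suc k')
    then have k': "k' \<le> m" using Suc.prems by simp
    have h1: "gb x m k' * PP x k' * PP x (m - k') = PP x m" using Suc.IH k' by simp
    have P1: "PP x (Suc k') = PP x k' * (1 - x^(Suc k'))" by (simp add: PP_def)
    have P2: "PP x (Suc m) = PP x m * (1 - x^(Suc m))" by (simp add: PP_def)
    show ?thesis
    proof (cases "k' = m")
      case True
      then show ?thesis using Suc gb_zero[of m "Suc m" x] gb_diag[of x m] by (simp add: PP_def)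
    next
      case False
      then have k2: "Suc k' \<le> m" using k' by simp
      have h2: "gb x m (Suc k') * PP x (Suc k') * PP x (m - Suc k') = PP x m" using Suc.IH k2 by simp
      have P3: "PP x (m - k') = PP x (m - Suc k') * (1 - x^(m - k'))"
      proof -
        have "m - k' = Suc (m - Suc k')" using k2 by simp
        then show ?thesis by (simp add: PP_def)
      qed
      have "Suc k' + (m-k') = Suc m" using k2 by simp
      then have e: "x^(Suc k') * x^(m-k') = x^(Suc m)" by (metis power_add)
      have "gb x (Suc m) (Suc k') * PP x (Suc k') * PP x (Suc m - Suc k')
         = gb x m k' * PP x k' * PP x (m - k') * (1 - x^(Suc k'))
           + x^(Suc k') * (gb x m (Suc k') * PP x (Suc k') * PP x (m - Suc k')) * (1 - x^(m - k'))"
        by (simp add: P1 P3 algebra_simps)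
      also have "\<dots> = PP x m * (1 - x^(Suc k')) + x^(Suc k') * PP x m * (1 - x^(m-k'))"
        using h1 h2 by simp
      also have "\<dots> = PP x m * (1 - x^(Suc k') * x^(m-k'))" by (simp add: algebra_simps)
      also have "\<dots> = PP x (Suc m)" using e P2 by simp
      finally show ?thesis using Suc by simp
    qed
  qed
qed

definition ee :: "nat \<Rightarrow> int \<Rightarrow> complex" where
  "ee q n = exp (2 * pi * \<i> * of_int n / of_nat q)"

lemma ee_add: "ee q (a + b) = ee q a * ee q b"
proof -
  have "2 * pi * \<i> * of_int (a + b) / of_nat q = 2 * pi * \<i> * of_int a / of_nat q + 2 * pi * \<i> * of_int b / of_nat q"
    by (simp add: distrib_left add_divide_distrib)
  then show ?thesis unfolding ee_def by (simp add: exp_add)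
qed

lemma ee_0[simp]: "ee q 0 = 1" unfolding ee_def by simp

lemma ee_mult_q: "0 < q \<Longrightarrow> ee q (int q * t) = 1"
proof -
  assume q: "0 < q"
  have "2 * pi * \<i> * of_int (int q * t) / of_nat q = \<i> * (of_int t * (of_real pi * 2))"
    using q by (simp add: field_simps)
  then show ?thesis unfolding ee_def by simp
qed

lemma ee_mod: "0 < q \<Longrightarrow> ee q (a mod int q) = ee q a"
proof -
  assume q: "0 < q"
  have "a = a mod int q + int q * (a div int q)" by simp
  then have "ee q a = ee q (a mod int q) * ee q (int q * (a div int q))"
    by (metis ee_add)
  then show ?thesis using ee_mult_q[OF q] by simp
qed

lemma ee_cong: "0 < q \<Longrightarrow> [a = b] (mod int q) \<Longrightarrow> ee q a = ee q b"
  by (metis cong_def ee_mod)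

lemma ee_pow: "ee q a ^ n = ee q (a * int n)"
  by (induction n) (auto simp: ee_add algebra_simps)

lemma ee_neg: "ee q (- a) * ee q a = 1"
  by (metis add.left_inverse ee_0 ee_add)

lemma ee_eq_1_iff: "0 < q \<Longrightarrow> ee q a = 1 \<longleftrightarrow> int q dvd a"
proof -
  assume q: "0 < q"
  define r where "r = nat (a mod int q)"
  have r: "int r = a mod int q" using q by (simp add: r_def)
  have "ee q a = ee q (int r)" using ee_mod[OF q, of a] r by simp
  also have "\<dots> = exp(2 * of_real pi * \<i> * of_nat r / of_nat q)" unfolding ee_def by simp
  finally have "ee q a = 1 \<longleftrightarrow> q dvd r" using complex_root_unity_eq_1[of q r] q by simp
  also have "\<dots> \<longleftrightarrow> int q dvd a mod int q" using r by (metis int_dvd_int_iff)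
  also have "\<dots> \<longleftrightarrow> int q dvd a" by (simp add: dvd_mod_iff)
  finally show ?thesis .
qed

lemma cnj_ee: "cnj (ee q a) = ee q (- a)"
  unfolding ee_def by (subst exp_cnj) simp

lemma ee_minus_ee: "ee q a - ee q (- a) = 2 * \<i> * sin (2 * pi * a / q)"
proof -
  have "ee q a = cis (2 * pi * a / q)" unfolding ee_def cis_conv_exp by (simp add: algebra_simps)
  moreover have "ee q (-a) = cis (- (2 * pi * a / q))" unfolding ee_def cis_conv_exp by (simp add: algebra_simps)
  ultimately show ?thesis by (simp add: cis.ctr complex_eq_iff)
qed

lemma sum_reindex_mod:
  fixes g :: "nat \<Rightarrow> 'b::comm_monoid_add"
  assumes q: "0 < q" and inj: "\<And>a b. a < q \<Longrightarrow> b < q \<Longrightarrow> f a mod q = f b mod q \<Longrightarrow> a = b"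
  shows "(\<Sum>k<q. g (f k mod q)) = (\<Sum>k<q. g k)"
proof -
  let ?h = "\<lambda>k. f k mod q"
  have io: "inj_on ?h {..<q}" unfolding inj_on_def lessThan_iff using inj by blast
  have sub: "?h ` {..<q} \<subseteq> {..<q}" using q by auto
  have im: "?h ` {..<q} = {..<q}" using endo_inj_surj[OF _ sub io] by simp
  have "sum g (?h ` {..<q}) = (\<Sum>k<q. g (?h k))" using sum.reindex[OF io, of g] unfolding comp_def .
  then show ?thesis using im by simp
qed

lemma sum_shift_mod:
  fixes g :: "nat \<Rightarrow> 'b::comm_monoid_add"
  assumes q: "0 < q" and per: "\<And>n. g n = g (n mod q)"
  shows "(\<Sum>k<q. g (k + c)) = (\<Sum>k<q. g k)"
proof -
  have "(\<Sum>k<q. g (k + c)) = (\<Sum>k<q. g ((k + c) mod q))" by (intro sum.cong refl) (rule per)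
  also have "\<dots> = (\<Sum>k<q. g k)"
  proof (rule sum_reindex_mod[OF q])
    fix a b assume "a < q" "b < q" "(a + c) mod q = (b + c) mod q"
    have "[a + c = b + c] (mod q)" using \<open>(a + c) mod q = (b + c) mod q\<close> unfolding cong_def .
    then have "[a = b] (mod q)" by (simp only: cong_add_rcancel_nat)
    then have "a mod q = b mod q" unfolding cong_def .
    then show "a = b" using \<open>a < q\<close> \<open>b < q\<close> by simp
  qed
  finally show ?thesis .
qed

lemma x_pow_ne_1:
  assumes "odd q" "0 < j" "j < q"
  shows "ee q (-2) ^ j \<noteq> 1"
proof
  assume h: "ee q (-2) ^ j = 1"
  have q0: "0 < q" using assms by simp
  have e: "-2 * int j = - int (2 * j)" by simp
  have "ee q (- int (2 * j)) = 1" using h unfolding ee_pow e .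
  then have "int q dvd (- int (2 * j))" using ee_eq_1_iff[OF q0] by blast
  then have "int q dvd int (2 * j)" by (simp only: dvd_minus_iff)
  then have "q dvd 2 * j" by (simp only: int_dvd_int_iff)
  then have "q dvd j" using assms(1) by (metis coprime_dvd_mult_right_iff coprime_right_2_iff_odd mult.commute)
  then show False using assms(2,3) dvd_imp_le by fastforce
qed

lemma PP_ne_0:
  assumes "odd q" "m < q"
  shows "PP (ee q (-2)) m \<noteq> 0"
proof -
  have "1 - ee q (-2) ^ Suc j \<noteq> 0" if "j < m" for j
    using x_pow_ne_1[OF assms(1), of "Suc j"] that assms(2) by auto
  then show ?thesis unfolding PP_def by (auto simp: prod_zero_iff simp del: power_Suc)
qed

lemma aux1: fixes A B s E P :: complex shows "A * B = 1 \<Longrightarrow> s * E * P * (1 - A) = (- s) * (E * A) * (P * (1 - B))"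
proof -
  assume h: "A * B = 1"
  have "(- s) * (E * A) * (P * (1 - B)) = - (s*E*P) * (A - A*B)" by (simp add: algebra_simps)
  also have "\<dots> = - (s*E*P) * (A - 1)" using h by simp
  also have "\<dots> = s*E*P*(1-A)" by (simp add: algebra_simps)
  finally show ?thesis by simp
qed

lemma R1:
  assumes q: "0 < q" and k: "k \<le> q - 1"
  shows "(\<Prod>j<k. 1 - ee q (-2) ^ (q - 1 - j)) = (-1)^k * ee q (int (k * (k+1))) * PP (ee q (-2)) k"
  using k
proof (induction k)
  case 0 then show ?case by (simp add: PP_def)
next
  case (Suc k)
  have kq: "k < q - 1" using Suc.prems by simp
  have c: "[-2 * int (q - 1 - k) = 2 * int (Suc k)] (mod int q)"
  proof -
    have "-2 * int (q - 1 - k) = 2 * int (Suc k) + int q * (-2)" using kq by (simp add: of_nat_diff algebra_simps)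
    then show ?thesis by (metis cong_add_lcancel_0 cong_mult_self_left)
  qed
  have f1: "1 - ee q (-2) ^ (q - 1 - k) = 1 - ee q (2 * int (Suc k))"
    unfolding ee_pow using ee_cong[OF q c] by simp
  have f2: "ee q (-2) ^ Suc k = ee q (- (2 * int (Suc k)))" unfolding ee_pow by simp
  have f3: "ee q (int (Suc k * (Suc k + 1))) = ee q (int (k * (k+1))) * ee q (2 * int (Suc k))"
    by (simp add: ee_add[symmetric] algebra_simps)
  have f4: "ee q (2 * int (Suc k)) * ee q (- (2 * int (Suc k))) = 1" by (subst mult.commute) (rule ee_neg)
  have P: "PP (ee q (-2)) (Suc k) = PP (ee q (-2)) k * (1 - ee q (-2) ^ Suc k)" by (simp add: PP_def)
  have "(\<Prod>j<Suc k. 1 - ee q (-2) ^ (q - 1 - j)) = (-1)^k * ee q (int (k * (k+1))) * PP (ee q (-2)) k * (1 - ee q (2 * int (Suc k)))"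
    using Suc.IH kq f1 by simp
  also have "\<dots> = (-1)^(Suc k) * ee q (int (Suc k * (Suc k+1))) * PP (ee q (-2)) (Suc k)"
  proof -
    have m1: "(-1::complex)^(Suc k) = - ((-1)^k)" by simp
    show ?thesis unfolding P f2 f3 m1 by (rule aux1[OF f4])
  qed
  finally show ?case .
qed

lemma PP_Suc: "PP x (Suc n) = PP x n * (1 - x^(Suc n))" by (simp add: PP_def)

lemma R2:
  assumes k: "k \<le> q - 1"
  shows "PP x (q - 1) = PP x (q - 1 - k) * (\<Prod>j<k. 1 - x ^ (q - 1 - j))"
  using k
proof (induction k)
  case 0 then show ?case by simp
next
  case (Suc k)
  have e: "q - 1 - k = Suc (q - 1 - Suc k)" using Suc.prems by simp
  have hP: "PP x (q - 1 - k) = PP x (q - 1 - Suc k) * (1 - x ^ (q - 1 - k))"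
    using PP_Suc[of x "q - 1 - Suc k"] unfolding e[symmetric] .
  have hQ: "(\<Prod>j<Suc k. 1 - x ^ (q - 1 - j)) = (\<Prod>j<k. 1 - x ^ (q - 1 - j)) * (1 - x ^ (q - 1 - k))"
    by (simp only: prod.lessThan_Suc)
  have "PP x (q - 1) = PP x (q - 1 - k) * (\<Prod>j<k. 1 - x ^ (q - 1 - j))" using Suc by simp
  also have "\<dots> = PP x (q - 1 - Suc k) * ((\<Prod>j<k. 1 - x ^ (q - 1 - j)) * (1 - x ^ (q - 1 - k)))"
    unfolding hP by (simp only: mult_ac)
  finally show ?case unfolding hQ .
qed

lemma gb_eval:
  assumes q: "odd q" and k: "k \<le> q - 1"
  shows "gb (ee q (-2)) (q - 1) k = (-1)^k * ee q (int (k * (k+1)))"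
proof -
  let ?x = "ee q (-2)"
  have q0: "0 < q" using q by (cases q) auto
  have a: "gb ?x (q-1) k * PP ?x k * PP ?x (q - 1 - k) = PP ?x (q - 1)" using gb_prod k by blast
  have b: "PP ?x (q - 1) = PP ?x (q - 1 - k) * ((-1)^k * ee q (int (k * (k+1))) * PP ?x k)"
    using R2[OF k, of ?x] R1[OF q0 k] by simp
  have n1: "PP ?x k \<noteq> 0" using PP_ne_0[OF q] k q0 by simp
  have n2: "PP ?x (q - 1 - k) \<noteq> 0" using PP_ne_0[OF q] q0 by simp
  from a b have "gb ?x (q-1) k * (PP ?x k * PP ?x (q - 1 - k)) = ((-1)^k * ee q (int (k * (k+1)))) * (PP ?x k * PP ?x (q - 1 - k))"
    by (simp add: algebra_simps)
  then show ?thesis using n1 n2 by simp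
qed

definition Qs :: "nat \<Rightarrow> complex" where
  "Qs q = (\<Sum>n<q. ee q (int (n * n)))"

lemma ee_sq_mod: "0 < q \<Longrightarrow> ee q (int (n * n)) = ee q (int ((n mod q) * (n mod q)))"
proof -
  assume q: "0 < q"
  have "[n mod q * (n mod q) = n * n] (mod q)"
    by (simp add: cong_def mod_mult_eq)
  then have "[int (n mod q * (n mod q)) = int (n * n)] (mod int q)"
    by (simp only: cong_int_iff)
  then show ?thesis using ee_cong[OF q] by metis
qed

lemma step_e:
  assumes q: "q = 2 * h + 1"
  shows "(\<Sum>k<q. ee q (int (k * (k+1)))) * ee q (int ((h+1)*(h+1))) = Qs q"
proof -
  have q0: "0 < q" using q by simp
  have "(\<Sum>k<q. ee q (int (k * (k+1)))) * ee q (int ((h+1)*(h+1))) = (\<Sum>k<q. ee q (int ((k + (h+1)) * (k + (h+1)))))"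
    unfolding sum_distrib_right
  proof (intro sum.cong refl)
    fix k
    have "int ((k + (h+1)) * (k + (h+1))) = int (k * (k+1)) + int ((h+1)*(h+1)) + int q * int k"
      using q by (simp add: algebra_simps)
    then show "ee q (int (k * (k+1))) * ee q (int ((h+1)*(h+1))) = ee q (int ((k + (h+1)) * (k + (h+1))))"
      by (simp only: ee_add ee_mult_q[OF q0] mult_1_right)
  qed
  also have "\<dots> = Qs q"
    unfolding Qs_def
    by (rule sum_shift_mod[OF q0, where g = "\<lambda>n. ee q (int (n * n))"]) (rule ee_sq_mod[OF q0])
  finally show ?thesis .
qed

lemma step_f:
  "(\<Prod>j<H. 1 - ee q (-2) ^ (2*j+1)) * ee q (int (H*H)) = (\<Prod>j<H. 2 * \<i> * complex_of_real (sin (2 * pi * real (2*j+1) / q)))"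
proof (induction H)
  case 0 then show ?case by simp
next
  case (Suc H)
  let ?a = "int (2*H+1)"
  have e1: "ee q (-2) ^ (2*H+1) * ee q ?a = ee q (- ?a)"
    unfolding ee_pow ee_add[symmetric] by (simp add: algebra_simps)
  have e2: "ee q (int (Suc H * Suc H)) = ee q (int (H*H)) * ee q ?a"
    unfolding ee_add[symmetric] by (simp add: algebra_simps)
  have e3: "(1 - ee q (-2) ^ (2*H+1)) * ee q ?a = 2 * \<i> * complex_of_real (sin (2 * pi * real (2*H+1) / q))"
  proof -
    have "(1 - ee q (-2) ^ (2*H+1)) * ee q ?a = ee q ?a - ee q (- ?a)" using e1 by (simp add: algebra_simps)
    also have "\<dots> = 2 * \<i> * sin (2 * pi * ?a / q)" by (rule ee_minus_ee)
    finally show ?thesis by simp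
  qed
  have "(\<Prod>j<Suc H. 1 - ee q (-2) ^ (2*j+1)) * ee q (int (Suc H * Suc H))
      = ((\<Prod>j<H. 1 - ee q (-2) ^ (2*j+1)) * ee q (int (H*H))) * ((1 - ee q (-2) ^ (2*H+1)) * ee q ?a)"
    unfolding e2 by (simp add: algebra_simps)
  also have "\<dots> = (\<Prod>j<Suc H. 2 * \<i> * complex_of_real (sin (2 * pi * real (2*j+1) / q)))"
    unfolding Suc.IH e3 by simp
  finally show ?case .
qed

lemma Q_eval:
  assumes q: "q = 2 * h + 1"
  shows "Qs q = (2 * \<i>)^h * complex_of_real (\<Prod>j<h. sin (2 * pi * real (2*j+1) / q))"
proof -
  let ?x = "ee q (-2)"
  have oq: "odd q" using q by simp
  have c: "GS ?x (q - 1) = (\<Sum>k<q. ee q (int (k * (k+1))))"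
  proof -
    have "GS ?x (q - 1) = (\<Sum>k<q. (-1)^k * gb ?x (q - 1) k)" unfolding GS_def using q by simp
    also have "\<dots> = (\<Sum>k<q. ee q (int (k * (k+1))))"
    proof (intro sum.cong refl)
      fix k assume "k \<in> {..<q}"
      then have "k \<le> q - 1" by simp
      then show "(-1)^k * gb ?x (q - 1) k = ee q (int (k * (k+1)))"
        using gb_eval[OF oq] by (simp add: mult.assoc[symmetric] power_mult_distrib[symmetric])
    qed
    finally show ?thesis .
  qed
  have d: "GS ?x (q - 1) = (\<Prod>j<h. 1 - ?x^(2*j+1))" using GS_even[of ?x h] q by simp
  have g: "ee q (int ((h+1)*(h+1))) = ee q (int (h*h))"
  proof -
    have "int ((h+1)*(h+1)) = int (h*h) + int q * 1" using q by (simp add: algebra_simps)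
    then show ?thesis using ee_add ee_mult_q[of q 1] q by simp
  qed
  have "Qs q = (\<Prod>j<h. 1 - ?x^(2*j+1)) * ee q (int (h*h))"
    using step_e[OF q] c d g by simp
  also have "\<dots> = (\<Prod>j<h. 2 * \<i> * complex_of_real (sin (2 * pi * real (2*j+1) / q)))"
    by (rule step_f)
  also have "\<dots> = (2 * \<i>)^h * complex_of_real (\<Prod>j<h. sin (2 * pi * real (2*j+1) / q))"
    by (simp add: prod.distrib)
  finally show ?thesis .
qed

lemma ee_geom:
  assumes q: "odd q" and d: "0 < d" "d < q"
  shows "(\<Sum>b<q. ee q (2 * int d * int b)) = 0"
proof -
  let ?z = "ee q (2 * int d)"
  have q0: "0 < q" using d by simp
  have z1: "?z \<noteq> 1"
  proof
    assume "?z = 1"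
    then have "int q dvd int (2 * d)" using ee_eq_1_iff[OF q0] by simp
    then have "q dvd 2 * d" by (simp only: int_dvd_int_iff)
    then have "q dvd d" using q by (metis coprime_dvd_mult_right_iff coprime_right_2_iff_odd mult.commute)
    then show False using d dvd_imp_le by fastforce
  qed
  have zq: "?z ^ q = 1" unfolding ee_pow using ee_mult_q[OF q0, of "2 * int d"] by (simp add: mult.commute)
  have "(\<Sum>b<q. ee q (2 * int d * int b)) = (\<Sum>b<q. ?z ^ b)" unfolding ee_pow by simp
  also have "\<dots> = 0" using geometric_sum[OF z1, of q] zq by simp
  finally show ?thesis .
qed

lemma Qs_norm:
  assumes q: "odd q"
  shows "Qs q * cnj (Qs q) = of_nat q"
proof -
  have q0: "0 < q" using q by (cases q) auto
  have "Qs q * cnj (Qs q) = (\<Sum>b<q. \<Sum>a<q. ee q (int (a*a) - int (b*b)))"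
  proof -
    have "Qs q * cnj (Qs q) = (\<Sum>a<q. \<Sum>b<q. ee q (int (a*a)) * ee q (- int (b*b)))"
      by (simp only: Qs_def cnj_sum cnj_ee sum_product)
    also have "\<dots> = (\<Sum>a<q. \<Sum>b<q. ee q (int (a*a) - int (b*b)))"
      by (simp only: ee_add[symmetric] diff_conv_add_uminus)
    also have "\<dots> = (\<Sum>b<q. \<Sum>a<q. ee q (int (a*a) - int (b*b)))"
      by (rule sum.swap)
    finally show ?thesis .
  qed
  also have "\<dots> = (\<Sum>b<q. \<Sum>d<q. ee q (int (d*d)) * ee q (2 * int d * int b))"
  proof (rule sum.cong[OF refl])
    fix b
    define g where "g = (\<lambda>a. ee q (int (a*a) - int (b*b)))"
    have per: "g n = g (n mod q)" for n
    proof -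
      have "[n * n = (n mod q)*(n mod q)] (mod q)" by (simp add: cong_def mod_mult_eq)
      then have "[int (n * n) = int ((n mod q)*(n mod q))] (mod int q)" by (simp only: cong_int_iff)
      then have "[int (n*n) - int (b*b) = int ((n mod q)*(n mod q)) - int (b*b)] (mod int q)"
        by (simp add: cong_diff)
      then show ?thesis unfolding g_def by (rule ee_cong[OF q0])
    qed
    have "(\<Sum>d<q. g (d + b)) = (\<Sum>a<q. g a)" by (rule sum_shift_mod[where g=g, OF q0 per])
    then have "(\<Sum>a<q. ee q (int (a*a) - int (b*b))) = (\<Sum>d<q. ee q (int ((d+b)*(d+b)) - int (b*b)))"
      by (simp only: g_def)
    also have "\<dots> = (\<Sum>d<q. ee q (int (d*d)) * ee q (2 * int d * int b))"
    proof (intro sum.cong refl)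
      fix d
      have "int ((d+b)*(d+b)) - int (b*b) = int (d*d) + 2 * int d * int b" by (simp add: algebra_simps)
      then show "ee q (int ((d+b)*(d+b)) - int (b*b)) = ee q (int (d*d)) * ee q (2 * int d * int b)"
        by (simp only: ee_add)
    qed
    finally show "(\<Sum>a<q. ee q (int (a*a) - int (b*b))) = (\<Sum>d<q. ee q (int (d*d)) * ee q (2 * int d * int b))" .
  qed
  also have "\<dots> = (\<Sum>d<q. ee q (int (d*d)) * (\<Sum>b<q. ee q (2 * int d * int b)))"
    by (simp only: sum_distrib_left) (rule sum.swap)
  also have "\<dots> = (\<Sum>d<q. if d = 0 then of_nat q else 0)"
  proof (rule sum.cong[OF refl])
    fix d assume "d \<in> {..<q}"
    then show "ee q (int (d*d)) * (\<Sum>b<q. ee q (2 * int d * int b)) = (if d = 0 then of_nat q else 0)"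
      using ee_geom[OF q, of d] by auto
  qed
  also have "\<dots> = of_nat q" using q0 by simp
  finally show ?thesis .
qed

lemma sign_prod:
  fixes s :: "nat \<Rightarrow> real"
  assumes pos: "\<And>j. j < J \<Longrightarrow> 0 < s j" and neg: "\<And>j. J \<le> j \<Longrightarrow> j < J + d \<Longrightarrow> s j < 0"
  shows "\<exists>R>0. (\<Prod>j<J+d. s j) = (-1)^d * R"
  using neg
proof (induction d)
  case 0
  have "0 < (\<Prod>j<J. s j)" using pos by (intro prod_pos) auto
  then show ?case by auto
next
  case (Suc d)
  then obtain R where R: "R > 0" "(\<Prod>j<J+d. s j) = (-1)^d * R" by auto
  have sn: "s (J + d) < 0" using Suc.prems by simp
  have "(\<Prod>j<J + Suc d. s j) = (-1)^(Suc d) * (R * (- s (J + d)))" using R by simp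
  moreover have "R * (- s (J + d)) > 0" using mult_pos_pos[OF R(1), of "- s (J+d)"] sn by simp
  ultimately show ?case by blast
qed

lemma sin_pos_case:
  assumes "0 < q" "2 * (2*j+1) < q"
  shows "0 < sin (2 * pi * real (2*j+1) / real q)"
proof (rule sin_gt_zero)
  show "0 < 2 * pi * real (2*j+1) / real q" using assms by simp
  have "real (2 * (2*j+1)) < real q" using assms by linarith
  then have "pi * real (2 * (2*j+1)) < pi * real q" using pi_gt_zero by simp
  then have "2 * pi * real (2*j+1) < pi * q" by (simp add: algebra_simps)
  then show "2 * pi * real (2*j+1) / real q < pi" using assms by (simp add: divide_less_eq algebra_simps)
qed

lemma sin_neg_case:
  assumes "0 < q" "q < 2 * (2*j+1)" "2*j+1 < q"
  shows "sin (2 * pi * real (2*j+1) / real q) < 0"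
proof (rule sin_lt_zero)
  have "real q < real (2 * (2*j+1))" using assms by linarith
  then have "pi * real q < pi * real (2 * (2*j+1))" using pi_gt_zero by simp
  then have "pi * q < 2 * pi * real (2*j+1)" by (simp add: algebra_simps)
  then show "pi < 2 * pi * real (2*j+1) / real q" using assms by (simp add: less_divide_eq algebra_simps)
  have "real (2*j+1) < real q" using assms by linarith
  then have "2 * pi * real (2*j+1) < 2 * pi * q" by simp
  then show "2 * pi * real (2*j+1) / real q < 2 * pi" using assms by (simp add: divide_less_eq algebra_simps)
qed

lemma T_from_norm:
  fixes T :: real and c :: complex
  assumes "T > 0" "norm c = 1" "(c * T) * cnj (c * T) = of_nat q"
  shows "T = sqrt q"
proof -
  have "c * cnj c = 1" using assms(2) by (metis complex_norm_square mult.commute norm_one of_real_1 power_one)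
  have e: "(c * T) * cnj (c * T) = (c * cnj c) * complex_of_real (T * T)" by simp
  have "complex_of_real (T * T) = (c * T) * cnj (c * T)" unfolding e \<open>c * cnj c = 1\<close> by simp
  then have "complex_of_real (T * T) = of_nat q" using assms(3) by (rule trans)
  then have "T * T = real q" by (metis of_real_eq_iff of_real_of_nat_eq)
  then show ?thesis using assms(1) by (metis abs_of_pos real_sqrt_abs2)
qed

lemma a1: "(2 * \<i>)^(m+m) = ((2*\<i>)^2)^m" by (simp only: mult_2[symmetric] power_mult)
lemma a2: "((2*\<i>)^2) = -4" by (simp add: power2_eq_square)
lemma a3: "(-4::complex)^m * complex_of_real ((-1)^m * R) = 1 * complex_of_real (4^m * R)"
proof -
  have "(-4::complex)^m = (-1)^m * 4^m" by (simp add: power_mult_distrib[symmetric])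
  moreover have "(-1::complex)^m * (-1)^m = 1" by (simp add: power_mult_distrib[symmetric])
  ultimately show ?thesis by simp
qed
lemma a4: "(2 * \<i>)^((m+1)+m) = (2*\<i>) * ((2*\<i>)^2)^m"
proof -
  have e: "(m+1)+m = Suc (2*m)" by simp
  show ?thesis unfolding e by (simp only: power_Suc power_mult)
qed
lemma a5: "(2*\<i>) * (-4::complex)^m * complex_of_real ((-1)^m * R) = \<i> * complex_of_real (2 * 4^m * R)"
proof -
  have "(-4::complex)^m = (-1)^m * 4^m" by (simp add: power_mult_distrib[symmetric])
  moreover have "(-1::complex)^m * (-1)^m = 1" by (simp add: power_mult_distrib[symmetric])
  ultimately show ?thesis by simp
qed

lemma Qs_val:
  assumes q: "odd q" "1 < q"
  shows "Qs q = (if q mod 4 = 1 then complex_of_real (sqrt q) else \<i> * complex_of_real (sqrt q))"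
proof -
  have q0: "0 < q" using q by simp
  let ?s = "\<lambda>j. sin (2 * pi * real (2*j+1) / real q)"
  define m where "m = q div 4"
  have "q mod 4 = 1 \<or> q mod 4 = 3" using q(1) by presburger
  moreover have "q = 4 * m + q mod 4" unfolding m_def by simp
  ultimately have m: "q = 4*m+1 \<or> q = 4*m+3" by auto
  show ?thesis
  proof (cases "q = 4*m+1")
    case True
    have pos: "\<And>j. j < m \<Longrightarrow> 0 < ?s j" using sin_pos_case[OF q0] True by simp
    have neg: "\<And>j. m \<le> j \<Longrightarrow> j < m + m \<Longrightarrow> ?s j < 0" using sin_neg_case[OF q0] True by simp
    obtain R where R: "R > 0" "(\<Prod>j<m+m. ?s j) = (-1)^m * R" using sign_prod[where s="?s" and J=m and d=m, OF pos neg] by blast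
    have hq: "q = 2*(m+m)+1" using True by simp
    have "Qs q = (2 * \<i>)^(m+m) * complex_of_real ((-1)^m * R)"
      using Q_eval[OF hq] unfolding R(2) .
    also have "\<dots> = 1 * complex_of_real (4^m * R)" unfolding a1 a2 by (rule a3)
    finally have Qe: "Qs q = 1 * complex_of_real (4^m * R)" .
    have "4^m * R = sqrt q"
    proof (rule T_from_norm[of _ 1])
      show "0 < 4^m * R" using R(1) by simp
      show "norm (1::complex) = 1" by simp
      show "(1 * complex_of_real (4^m * R)) * cnj (1 * complex_of_real (4^m * R)) = of_nat q"
        using Qs_norm[OF q(1)] unfolding Qe .
    qed
    then show ?thesis using Qe True by simp
  next
    case False
    then have F: "q = 4*m+3" using m by simp
    have pos: "\<And>j. j < m+1 \<Longrightarrow> 0 < ?s j" using sin_pos_case[OF q0] F by simp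
    have neg: "\<And>j. m+1 \<le> j \<Longrightarrow> j < (m+1) + m \<Longrightarrow> ?s j < 0" using sin_neg_case[OF q0] F by simp
    obtain R where R: "R > 0" "(\<Prod>j<(m+1)+m. ?s j) = (-1)^m * R" using sign_prod[where s="?s" and J="m+1" and d=m, OF pos neg] by blast
    have hq: "q = 2*((m+1)+m)+1" using F by simp
    have "Qs q = (2 * \<i>)^((m+1)+m) * complex_of_real ((-1)^m * R)"
      using Q_eval[OF hq] unfolding R(2) .
    also have "\<dots> = \<i> * complex_of_real (2 * 4^m * R)" unfolding a4 a2 by (rule a5)
    finally have Qe: "Qs q = \<i> * complex_of_real (2 * 4^m * R)" .
    have "2 * 4^m * R = sqrt q"
    proof (rule T_from_norm[of _ \<i>])
      show "0 < 2 * 4^m * R" using R(1) by simp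
      show "norm \<i> = 1" by simp
      show "(\<i> * complex_of_real (2 * 4^m * R)) * cnj (\<i> * complex_of_real (2 * 4^m * R)) = of_nat q"
        using Qs_norm[OF q(1)] unfolding Qe .
    qed
    then show ?thesis using Qe F by simp
  qed
qed

lemma Leg_cong: "[a = b] (mod m) \<Longrightarrow> Legendre a m = Legendre b m"
proof -
  assume h: "[a = b] (mod m)"
  have 1: "[a = 0] (mod m) \<longleftrightarrow> [b = 0] (mod m)" using h by (meson cong_sym cong_trans)
  have 2: "QuadRes m a \<longleftrightarrow> QuadRes m b" unfolding QuadRes_def using h by (meson cong_sym cong_trans)
  show ?thesis unfolding Legendre_def using 1 2 by simp
qed

lemma Leg_vals: "Legendre a m = 0 \<or> Legendre a m = 1 \<or> Legendre a m = -1"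
  by (simp add: Legendre_def)

lemma Leg_0_iff: "Legendre a m = 0 \<longleftrightarrow> m dvd a"
  by (simp add: Legendre_def cong_0_iff)

lemma Leg_mult:
  fixes p :: nat
  assumes p: "prime p" "2 < p"
  shows "Legendre (a*b) (int p) = Legendre a (int p) * Legendre b (int p)"
proof -
  have e1: "[Legendre (a*b) p = (a*b) ^ ((p - 1) div 2)] (mod p)" using euler_criterion[OF p] by simp
  have e2: "[Legendre a p * Legendre b p = a ^ ((p - 1) div 2) * b ^ ((p - 1) div 2)] (mod p)"
    using euler_criterion[OF p, of a] euler_criterion[OF p, of b] by (simp add: cong_mult)
  have "[Legendre (a*b) p = Legendre a p * Legendre b p] (mod p)"
    using e1 e2 by (simp add: power_mult_distrib) (meson cong_sym cong_trans)
  then have d: "p dvd Legendre (a*b) p - Legendre a p * Legendre b p" by (simp add: cong_iff_dvd_diff)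
  have b: "\<bar>Legendre (a*b) p - Legendre a p * Legendre b p\<bar> < p"
    using Leg_vals[of "a*b" p] Leg_vals[of a p] Leg_vals[of b p] p(2) by auto
  show ?thesis
  proof (rule ccontr)
    assume "Legendre (a*b) p \<noteq> Legendre a p * Legendre b p"
    then have "Legendre (a*b) p - Legendre a p * Legendre b p \<noteq> 0" by simp
    from dvd_imp_le_int[OF this d] have "\<bar>int p\<bar> \<le> \<bar>Legendre (a*b) p - Legendre a p * Legendre b p\<bar>" .
    then show False using b by simp
  qed
qed

lemma Leg_sq1:
  fixes p :: int
  assumes "\<not> p dvd a"
  shows "Legendre a p * Legendre a p = 1"
  using assms Leg_vals[of a p] Leg_0_iff[of a p] by auto

lemma small_mult0: fixes q t :: int shows "0 < q \<Longrightarrow> -q < q*t \<Longrightarrow> q*t < q \<Longrightarrow> t = 0"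
proof -
  assume a: "0 < q" "-q < q*t" "q*t < q"
  have "q * t < q * 1" using a by simp
  then have "t < 1" using a(1) by (simp only: mult_less_cancel_left_pos)
  have "q * (-1) < q * t" using a by simp
  then have "-1 < t" using a(1) by (simp only: mult_less_cancel_left_pos)
  show "t = 0" using \<open>t < 1\<close> \<open>-1 < t\<close> by simp
qed

lemma small_mult1: fixes q t :: int shows "0 < q \<Longrightarrow> 0 < q*t \<Longrightarrow> q*t < 2*q \<Longrightarrow> t = 1"
proof -
  assume a: "0 < q" "0 < q*t" "q*t < 2*q"
  have "q * t < q * 2" using a(3) by (metis mult.commute)
  then have "t < 2" using a(1) by (simp only: mult_less_cancel_left_pos)
  have "q * 0 < q * t" using a by simp
  then have "0 < t" using a(1) by (simp only: mult_less_cancel_left_pos)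
  show "t = 1" using \<open>t < 2\<close> \<open>0 < t\<close> by simp
qed

lemma sq_count:
  fixes q :: nat
  assumes q: "prime q" "odd q" and m: "m < q"
  shows "card {n. n < q \<and> (n*n) mod q = m} = nat (1 + Legendre (int m) (int q))"
proof (cases "m = 0")
  case True
  have c: "(n < q \<and> (n*n) mod q = m) \<longleftrightarrow> n = 0" for n
  proof
    assume "n < q \<and> n * n mod q = m"
    then have "q dvd n * n" "n < q" using True by (auto simp add: dvd_eq_mod_eq_0)
    then have "q dvd n" "n < q" using q(1) by (auto simp add: prime_dvd_mult_iff)
    then show "n = 0" by (meson dvd_imp_le not_le neq0_conv)
  next
    assume "n = 0"
    then show "n < q \<and> n * n mod q = m" using True q by (simp add: prime_gt_0_nat)
  qed
  have "{n. n < q \<and> (n*n) mod q = m} = {0}" using c by auto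
  then show ?thesis using True by (simp add: Legendre_def)
next
  case False
  have nz: "\<not> [int m = 0] (mod int q)"
  proof
    assume "[int m = 0] (mod int q)"
    then have "q dvd m" by (simp add: cong_0_iff)
    then show False using False m by (meson dvd_imp_le not_le neq0_conv)
  qed
  show ?thesis
  proof (cases "QuadRes (int q) (int m)")
    case False
    have c: "\<not> (n < q \<and> (n*n) mod q = m)" for n
    proof
      assume "n < q \<and> n * n mod q = m"
      then have "[int n ^ 2 = int m] (mod int q)"
        by (metis cong_def cong_int_iff mod_mod_trivial power2_eq_square of_nat_mult)
      then show False using False unfolding QuadRes_def by blast
    qed
    have "{n. n < q \<and> (n*n) mod q = m} = {}" using c by auto
    then show ?thesis using nz False by (simp add: Legendre_def)
  next
    case QR: True
    then obtain y where y: "[y^2 = int m] (mod int q)" unfolding QuadRes_def by blast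
    have q0: "0 < q" using q by (simp add: prime_gt_0_nat)
    define y0 where "y0 = nat (y mod int q)"
    have y0q: "y0 < q" unfolding y0_def using q0 by (simp add: nat_less_iff)
    have y0c: "[int y0 = y] (mod int q)" unfolding y0_def cong_def using q0 by simp
    have y0sq: "[int y0 * int y0 = int m] (mod int q)"
      using y0c y by (metis cong_mult cong_trans power2_eq_square)
    have y0nz: "y0 \<noteq> 0"
    proof
      assume "y0 = 0"
      then have "[0 = int m] (mod int q)" using y0sq by simp
      then show False using nz by (meson cong_sym)
    qed
    have c1: "n = q - y0" if n: "n < q" "n * n mod q = m" "n \<noteq> y0" for n
    proof -
      have "[int n * int n = int m] (mod int q)"
        using n(2) by (metis cong_def cong_int_iff mod_mod_trivial of_nat_mult)
      then have "[int n * int n = int y0 * int y0] (mod int q)" using y0sq by (meson cong_sym cong_trans)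
      then have "int q dvd (int n - int y0) * (int n + int y0)"
        by (simp add: cong_iff_dvd_diff algebra_simps power2_eq_square)
      moreover have "prime (int q)" using q(1) by simp
      ultimately have "int q dvd (int n - int y0) \<or> int q dvd (int n + int y0)"
        by (simp add: prime_dvd_mult_iff)
      moreover have "\<not> int q dvd (int n - int y0)"
      proof
        assume "int q dvd (int n - int y0)"
        then obtain t where t: "int n - int y0 = int q * t" by blast
        have h1: "- int q < int q * t" using t n(1) y0q by linarith
        have h2: "int q * t < int q" using t n(1) y0q by linarith
        have "t = 0" using small_mult0[OF _ h1 h2] q0 by simp
        then show False using t n(3) by simp
      qed
      ultimately have "int q dvd (int n + int y0)" by blast
      then obtain t where t: "int n + int y0 = int q * t" by blast
      have h1: "0 < int q * t" using t y0nz by linarith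
      have h2: "int q * t < 2 * int q" using t n(1) y0q by linarith
      have "t = 1" using small_mult1[OF _ h1 h2] q0 by simp
      then show "n = q - y0" using t by simp
    qed
    have c2: "y0 * y0 mod q = m"
    proof -
      have "[int y0 * int y0 = int m] (mod int q)" by (rule y0sq)
      then have "[y0 * y0 = m] (mod q)" by (metis cong_int_iff of_nat_mult)
      then show "y0 * y0 mod q = m" using m by (simp add: cong_def)
    qed
    have c3: "(q - y0) * (q - y0) mod q = m"
    proof -
      have "int (q - y0) = int q - int y0" using y0q by simp
      then have "[int (q - y0) * int (q - y0) = int y0 * int y0] (mod int q)"
        by (simp add: cong_iff_dvd_diff algebra_simps)
      then have "[int (q - y0) * int (q - y0) = int m] (mod int q)" using y0sq by (meson cong_trans)
      then have "[(q - y0) * (q - y0) = m] (mod q)" by (metis cong_int_iff of_nat_mult)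
      then show "(q - y0) * (q - y0) mod q = m" using m by (simp add: cong_def)
    qed
    have set: "{n. n < q \<and> (n*n) mod q = m} = {y0, q - y0}"
      using c1 c2 c3 y0q y0nz by auto
    have "y0 \<noteq> q - y0" using q(2) y0q by presburger
    then have "card {n. n < q \<and> (n*n) mod q = m} = 2" unfolding set by simp
    then show ?thesis using nz QR by (simp add: Legendre_def)
  qed
qed

lemma sum_if_card:
  fixes c :: complex and q :: nat
  shows "(\<Sum>n<q. if P n then c else 0) = of_nat (card {n. n < q \<and> P n}) * c"
proof -
  have "(\<Sum>n<q. if P n then c else 0) = sum (\<lambda>_. c) {n \<in> {..<q}. P n}"
    using sum.inter_filter[of "{..<q}" "\<lambda>_. c" P] by simp
  also have "{n \<in> {..<q}. P n} = {n. n < q \<and> P n}" by auto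
  finally show ?thesis by simp
qed

lemma sum_sq_general:
  fixes F :: "nat \<Rightarrow> complex"
  assumes q: "prime q" "odd q"
  shows "(\<Sum>n<q. F (n*n mod q)) = (\<Sum>m<q. of_int (1 + Legendre (int m) (int q)) * F m)"
proof -
  have q0: "0 < q" using q by (simp add: prime_gt_0_nat)
  have "(\<Sum>n<q. F (n*n mod q)) = (\<Sum>n<q. \<Sum>m<q. if n*n mod q = m then F m else 0)"
  proof (rule sum.cong[OF refl])
    fix n
    have "n*n mod q \<in> {..<q}" using q0 by simp
    then show "F (n*n mod q) = (\<Sum>m<q. if n*n mod q = m then F m else 0)"
      by (simp add: sum.delta)
  qed
  also have "\<dots> = (\<Sum>m<q. \<Sum>n<q. if n*n mod q = m then F m else 0)" by (rule sum.swap)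
  also have "\<dots> = (\<Sum>m<q. of_int (1 + Legendre (int m) (int q)) * F m)"
  proof (rule sum.cong[OF refl])
    fix m assume m: "m \<in> {..<q}"
    have nn: "0 \<le> 1 + Legendre (int m) (int q)" using Leg_vals[of "int m" "int q"] by auto
    have "(\<Sum>n<q. if n*n mod q = m then F m else 0) = of_nat (card {n. n < q \<and> n*n mod q = m}) * F m"
      by (rule sum_if_card)
    also have "\<dots> = of_int (1 + Legendre (int m) (int q)) * F m"
      using sq_count[OF q, of m] m nn by simp
    finally show "(\<Sum>n<q. if n*n mod q = m then F m else 0) = of_int (1 + Legendre (int m) (int q)) * F m" .
  qed
  finally show ?thesis .
qed

lemma sum_ee_0:
  assumes q: "1 < q" and a: "\<not> int q dvd a"
  shows "(\<Sum>m<q. ee q (a * int m)) = 0"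
proof -
  have q0: "0 < q" using q by simp
  let ?z = "ee q a"
  have z1: "?z \<noteq> 1" using ee_eq_1_iff[OF q0] a by simp
  have zq: "?z ^ q = 1" unfolding ee_pow using ee_mult_q[OF q0, of a] by (simp add: mult.commute)
  have "(\<Sum>m<q. ee q (a * int m)) = (\<Sum>m<q. ?z ^ m)" unfolding ee_pow by simp
  also have "\<dots> = 0" using geometric_sum[OF z1, of q] zq by simp
  finally show ?thesis .
qed

lemma Leg_sum_0:
  assumes q: "prime q" "odd q"
  shows "(\<Sum>m<q. (of_int (Legendre (int m) (int q)) :: complex)) = 0"
proof -
  have "(\<Sum>n<q. (\<lambda>_. (1::complex)) (n*n mod q)) = (\<Sum>m<q. of_int (1 + Legendre (int m) (int q)) * (\<lambda>_. 1) m)"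
    by (rule sum_sq_general[OF q])
  then have "of_nat q = (\<Sum>m<q. (1::complex) + of_int (Legendre (int m) (int q)))" by simp
  then show ?thesis by (simp add: sum.distrib)
qed

lemma G1:
  assumes q: "prime q" "odd q"
  shows "(\<Sum>m<q. of_int (Legendre (int m) (int q)) * ee q (int m)) = Qs q"
proof -
  have q1: "1 < q" using prime_gt_1_nat[OF q(1)] .
  have q0: "0 < q" using q1 by simp
  have "Qs q = (\<Sum>n<q. ee q (int (n*n mod q)))"
    unfolding Qs_def by (rule sum.cong[OF refl]) (metis ee_mod[OF q0] of_nat_mod of_nat_0_less_iff q0)
  also have "\<dots> = (\<Sum>m<q. of_int (1 + Legendre (int m) (int q)) * ee q (int m))"
    by (rule sum_sq_general[OF q, where F = "\<lambda>m. ee q (int m)"])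
  also have "\<dots> = (\<Sum>m<q. ee q (int m)) + (\<Sum>m<q. of_int (Legendre (int m) (int q)) * ee q (int m))"
    by (simp add: sum.distrib algebra_simps)
  also have "(\<Sum>m<q. ee q (int m)) = 0" using sum_ee_0[OF q1, of 1] q1 by simp
  finally show ?thesis by simp
qed

lemma Ga:
  assumes q: "prime q" "odd q" and a: "\<not> q dvd a"
  shows "(\<Sum>m<q. of_int (Legendre (int m) (int q)) * ee q (int a * int m)) = of_int (Legendre (int a) (int q)) * Qs q"
proof -
  have q1: "1 < q" using prime_gt_1_nat[OF q(1)] .
  have q0: "0 < q" using q1 by simp
  have q2: "2 < q" using q1 q(2) by presburger
  have cop: "coprime a q" using a q(1) by (metis coprime_commute prime_imp_coprime)
  let ?L = "\<lambda>x. of_int (Legendre x (int q)) :: complex"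
  let ?g = "\<lambda>m. ?L (int m) * ee q (int m)"
  have "Qs q = (\<Sum>m<q. ?g m)" using G1[OF q] by simp
  also have "\<dots> = (\<Sum>m<q. ?g ((a * m) mod q))"
  proof (rule sum_reindex_mod[OF q0, symmetric])
    fix x y assume "x < q" "y < q" "a * x mod q = a * y mod q"
    then have "[a * x = a * y] (mod q)" unfolding cong_def by simp
    then have "[x = y] (mod q)" using cop by (simp add: cong_mult_lcancel_nat)
    then show "x = y" using \<open>x < q\<close> \<open>y < q\<close> by (simp add: cong_def)
  qed
  also have "\<dots> = (\<Sum>m<q. ?L (int a) * (?L (int m) * ee q (int a * int m)))"
  proof (rule sum.cong[OF refl])
    fix m
    have c: "[int (a * m mod q) = int a * int m] (mod int q)"
      by (simp add: cong_def of_nat_mod[symmetric] zmod_int[symmetric]) (simp add: of_nat_mod)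
    have "?L (int (a*m mod q)) = ?L (int a * int m)" using Leg_cong[OF c] by simp
    also have "\<dots> = ?L (int a) * ?L (int m)" using Leg_mult[OF q(1) q2] by simp
    finally have l: "?L (int (a*m mod q)) = ?L (int a) * ?L (int m)" .
    have e: "ee q (int (a*m mod q)) = ee q (int a * int m)" using ee_cong[OF q0 c] .
    show "?g (a * m mod q) = ?L (int a) * (?L (int m) * ee q (int a * int m))"
      unfolding l e by simp
  qed
  also have "\<dots> = ?L (int a) * (\<Sum>m<q. ?L (int m) * ee q (int a * int m))"
    by (simp add: sum_distrib_left)
  finally have h: "Qs q = ?L (int a) * (\<Sum>m<q. ?L (int m) * ee q (int a * int m))" .
  have "\<not> int q dvd int a" using a by simp
  then have sq: "?L (int a) * ?L (int a) = 1" using Leg_sq1[of "int q" "int a"]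
    by (metis of_int_1 of_int_mult)
  have "?L (int a) * Qs q = (?L (int a) * ?L (int a)) * (\<Sum>m<q. ?L (int m) * ee q (int a * int m))"
    unfolding h by (simp add: algebra_simps)
  then show ?thesis using sq by simp
qed

lemma inv_mod_prop:
  assumes "coprime p q" "1 < q"
  shows "inv_mod p q < q \<and> [p * inv_mod p q = 1] (mod q)"
proof -
  obtain x where x: "[p * x = Suc 0] (mod q)" using cong_solve_coprime_nat[OF assms(1)] by blast
  have "[p * (x mod q) = p * x] (mod q)" by (simp add: cong_def mod_mult_right_eq)
  then have "[p * (x mod q) = 1] (mod q)" using x by (metis One_nat_def cong_trans)
  moreover have "x mod q < q" using assms(2) by simp
  ultimately have "\<exists>u. u < q \<and> [p * u = 1] (mod q)" by blast
  then show ?thesis unfolding inv_mod_def by (rule someI_ex)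
qed

lemma zak_reindex:
  fixes F :: "int \<Rightarrow> complex"
  assumes q0: "0 < q" and cop: "coprime p q" and u: "[p * u = 1] (mod q)"
    and per: "\<And>x. F x = F (x mod int q)"
  shows "(\<Sum>r<q. F (int k + int r * int p) * ee q (int (r * j)))
       = (\<Sum>m<q. F (int m) * ee q (int u * int j * (int m - int k)))"
proof -
  let ?g = "\<lambda>m. F (int m) * ee q (int u * int j * (int m - int k))"
  have "(\<Sum>m<q. ?g m) = (\<Sum>r<q. ?g ((k + r * p) mod q))"
  proof (rule sum_reindex_mod[OF q0, symmetric])
    fix x y assume xy: "x < q" "y < q" "(k + x * p) mod q = (k + y * p) mod q"
    have "[k + x * p = k + y * p] (mod q)" using xy(3) unfolding cong_def .
    then have "[x * p = y * p] (mod q)" by (simp only: cong_add_lcancel_nat)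
    then have "[x = y] (mod q)" using cop by (simp add: cong_mult_rcancel_nat)
    then show "x = y" using xy(1,2) by (simp add: cong_def)
  qed
  also have "\<dots> = (\<Sum>r<q. F (int k + int r * int p) * ee q (int (r * j)))"
  proof (rule sum.cong[OF refl])
    fix r
    have i: "int ((k + r * p) mod q) = (int k + int r * int p) mod int q"
      by (simp add: zmod_int)
    have c: "[int ((k + r * p) mod q) = int k + int r * int p] (mod int q)"
      unfolding i cong_def by simp
    have f: "F (int ((k + r * p) mod q)) = F (int k + int r * int p)"
      unfolding i using per[of "int k + int r * int p"] by simp
    have uc: "[int p * int u = 1] (mod int q)" using u by (metis cong_int_iff of_nat_1 of_nat_mult)
    have c2: "[int u * int j * (int ((k + r * p) mod q) - int k) = int u * int j * (int r * int p)] (mod int q)"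
    proof -
      have "[int ((k + r * p) mod q) - int k = int k + int r * int p - int k] (mod int q)"
        by (rule cong_diff[OF c cong_refl])
      then have "[int ((k + r * p) mod q) - int k = int r * int p] (mod int q)" by simp
      then show ?thesis by (simp add: cong_scalar_left)
    qed
    have c3: "[int u * int j * (int r * int p) = int (r * j)] (mod int q)"
    proof -
      have eq: "int u * int j * (int r * int p) = (int p * int u) * (int r * int j)" by (simp add: algebra_simps)
      have "[(int p * int u) * (int r * int j) = 1 * (int r * int j)] (mod int q)"
        by (rule cong_mult[OF uc cong_refl])
      then show ?thesis unfolding eq by simp
    qed
    have e: "ee q (int u * int j * (int ((k + r * p) mod q) - int k)) = ee q (int (r * j))"
      using ee_cong[OF q0 cong_trans[OF c2 c3]] .
    show "?g ((k + r * p) mod q) = F (int k + int r * int p) * ee q (int (r * j))"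
      unfolding f e ..
  qed
  finally show ?thesis by simp
qed

lemma mj_k0:
  assumes p: "prime p" and q: "prime q" and pq: "p < q" and r: "r < q"
  shows "mod_jacobi p q (int r * int p) = (if r = 0 then 1 else 0)"
proof -
  have p0: "0 < p" using p by (simp add: prime_gt_0_nat)
  have "r * p < q * p" using r p0 by simp
  then have lt: "int r * int p < int p * int q" by (metis mult.commute of_nat_less_iff of_nat_mult)
  have md: "int r * int p mod (int p * int q) = int r * int p"
    using lt by (intro mod_pos_pos_trivial) auto
  show ?thesis
  proof (cases "r = 0")
    case True then show ?thesis by (simp add: mod_jacobi_def)
  next
    case False
    have nz: "int r * int p \<noteq> 0" using False p0 by simp
    have nq: "\<not> int q dvd int r * int p"
    proof
      assume "int q dvd int r * int p"
      then have "q dvd r * p" by (metis int_dvd_int_iff of_nat_mult)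
      then have "q dvd r \<or> q dvd p" using q by (simp add: prime_dvd_mult_iff)
      then show False using False r pq p0 by (meson dvd_imp_le leD neq0_conv)
    qed
    show ?thesis unfolding mod_jacobi_def Let_def md using nz nq False by simp
  qed
qed

lemma mj_k:
  assumes p: "prime p" and q: "prime q" and pq: "p < q" and r: "r < q" and k: "0 < k" "k < p"
  shows "mod_jacobi p q (int k + int r * int p)
     = (1 + of_int (Legendre (int k) (int p) * Legendre (int k + int r * int p) (int q))) / 2
       + (if int q dvd (int k + int r * int p) then 1/2 else 0)"
proof -
  let ?n = "int k + int r * int p"
  have p0: "0 < p" using p by (simp add: prime_gt_0_nat)
  have "r \<le> q - 1" using r by simp
  then have rp: "r * p \<le> (q - 1) * p" by (rule mult_right_mono) simp
  have "k + r * p < p + (q - 1) * p" using k rp by linarith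
  also have "p + (q - 1) * p = p * q" using r by (cases q) (auto simp: algebra_simps)
  finally have "k + r * p < p * q" .
  then have lt: "?n < int p * int q" by (metis of_nat_add of_nat_less_iff of_nat_mult)
  have "0 \<le> int r * int p" by simp
  then have "0 \<le> ?n" by linarith
  then have md: "?n mod (int p * int q) = ?n" using lt by (intro mod_pos_pos_trivial) auto
  have "0 \<le> int r * int p" by simp
  then have nz: "?n \<noteq> 0" using k by linarith
  have cp: "[?n = int k] (mod int p)" by (simp add: cong_def)
  have np: "\<not> int p dvd ?n"
  proof
    assume "int p dvd ?n"
    then have "int p dvd int k" using cp by (simp add: cong_dvd_iff)
    then have "p dvd k" by simp
    then show False using k by (meson dvd_imp_le leD)
  qed
  have Lp: "Legendre ?n (int p) = Legendre (int k) (int p)" using Leg_cong[OF cp] .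
  have Lk: "Legendre (int k) (int p) = 1 \<or> Legendre (int k) (int p) = -1"
    using Leg_vals[of "int k" "int p"] Leg_0_iff[of "int k" "int p"] np cp
    by (metis cong_dvd_iff)
  show ?thesis
  proof (cases "int q dvd ?n")
    case True
    then have "Legendre ?n (int q) = 0" using Leg_0_iff by blast
    then show ?thesis unfolding mod_jacobi_def Let_def md using nz np True by simp
  next
    case False
    have Lq: "Legendre ?n (int q) = 1 \<or> Legendre ?n (int q) = -1"
      using Leg_vals[of ?n "int q"] Leg_0_iff[of ?n "int q"] False by auto
    show ?thesis unfolding mod_jacobi_def Let_def md jacobi_pq_def Lp using nz np False Lk Lq
      by auto
  qed
qed

lemma X_k0:
  assumes p: "prime p" and q: "prime q" and pq: "p < q"
  shows "(\<Sum>r<q. mod_jacobi p q (int 0 + int r * int p) * ee q (int (r*j))) = 1"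
proof -
  have "(\<Sum>r<q. mod_jacobi p q (int 0 + int r * int p) * ee q (int (r*j))) = (\<Sum>r<q. if r = 0 then 1 else 0)"
    by (rule sum.cong[OF refl]) (simp add: mj_k0[OF p q pq])
  also have "\<dots> = 1" using q by (simp add: prime_gt_0_nat)
  finally show ?thesis .
qed

lemma X_k:
  assumes p: "prime p" and q: "prime q" "odd q" and pq: "p < q" and k: "0 < k" "k < p"
    and u: "[p * u = 1] (mod q)"
  shows "(\<Sum>r<q. mod_jacobi p q (int k + int r * int p) * ee q (int (r*j)))
     = (\<Sum>r<q. ee q (int (r*j))) / 2
       + of_int (Legendre (int k) (int p)) / 2 * ee q (- int (u*k*j))
           * (\<Sum>m<q. of_int (Legendre (int m) (int q)) * ee q (int (u*j) * int m))
       + ee q (- int (u*k*j)) / 2"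
proof -
  have q0: "0 < q" using q by (simp add: prime_gt_0_nat)
  have cop: "coprime p q" using p q pq primes_coprime by blast
  define Lk where "Lk = (of_int (Legendre (int k) (int p)) :: complex)"
  define F1 where "F1 = (\<lambda>x. of_int (Legendre x (int q)) :: complex)"
  define F2 where "F2 = (\<lambda>x::int. if int q dvd x then 1 else 0 :: complex)"
  have per1: "F1 x = F1 (x mod int q)" for x unfolding F1_def
    by (metis Leg_cong cong_mod_right cong_refl)
  have per2: "F2 x = F2 (x mod int q)" for x unfolding F2_def by (simp add: dvd_mod_iff)
  have E: "ee q (int u * int j * (int m - int k)) = ee q (int (u*j) * int m) * ee q (- int (u*k*j))" for m
  proof -
    have "int u * int j * (int m - int k) = int (u*j) * int m + - int (u*k*j)" by (simp add: algebra_simps)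
    then show ?thesis by (simp only: ee_add)
  qed
  have "(\<Sum>r<q. mod_jacobi p q (int k + int r * int p) * ee q (int (r*j)))
     = (\<Sum>r<q. ee q (int (r*j)) / 2 + Lk / 2 * (F1 (int k + int r * int p) * ee q (int (r*j)))
                + (F2 (int k + int r * int p) * ee q (int (r*j))) / 2)"
  proof (rule sum.cong[OF refl])
    fix r assume "r \<in> {..<q}"
    then have r: "r < q" by simp
    show "mod_jacobi p q (int k + int r * int p) * ee q (int (r*j)) =
      ee q (int (r*j)) / 2 + Lk / 2 * (F1 (int k + int r * int p) * ee q (int (r*j)))
                + (F2 (int k + int r * int p) * ee q (int (r*j))) / 2"
      unfolding mj_k[OF p q(1) pq r k] Lk_def F1_def F2_def
      by (simp add: field_simps)
  qed
  also have "\<dots> = (\<Sum>r<q. ee q (int (r*j))) / 2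
       + Lk / 2 * (\<Sum>r<q. F1 (int k + int r * int p) * ee q (int (r*j)))
       + (\<Sum>r<q. F2 (int k + int r * int p) * ee q (int (r*j))) / 2"
    by (simp add: sum.distrib sum_distrib_left sum_divide_distrib)
  also have "(\<Sum>r<q. F1 (int k + int r * int p) * ee q (int (r*j)))
      = (\<Sum>m<q. F1 (int m) * ee q (int u * int j * (int m - int k)))"
    by (rule zak_reindex[where F=F1, OF q0 cop u per1])
  also have "\<dots> = ee q (- int (u*k*j)) * (\<Sum>m<q. of_int (Legendre (int m) (int q)) * ee q (int (u*j) * int m))"
    unfolding E F1_def by (simp add: sum_distrib_left algebra_simps)
  also have "(\<Sum>r<q. F2 (int k + int r * int p) * ee q (int (r*j)))
      = (\<Sum>m<q. F2 (int m) * ee q (int u * int j * (int m - int k)))"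
    by (rule zak_reindex[where F=F2, OF q0 cop u per2])
  also have "\<dots> = (\<Sum>m<q. if m = 0 then ee q (- int (u*k*j)) else 0)"
  proof (rule sum.cong[OF refl])
    fix m assume "m \<in> {..<q}"
    then have "m < q" by simp
    then have "int q dvd int m \<longleftrightarrow> m = 0" by (auto dest: dvd_imp_le)
    then show "F2 (int m) * ee q (int u * int j * (int m - int k)) = (if m = 0 then ee q (- int (u*k*j)) else 0)"
      unfolding F2_def E by auto
  qed
  also have "\<dots> = ee q (- int (u*k*j))" using q0 by simp
  finally show ?thesis unfolding Lk_def by (simp add: algebra_simps)
qed

lemma Leg_one: "1 < m \<Longrightarrow> Legendre 1 m = 1"
proof -
  assume m: "1 < m"
  have "\<not> [1 = 0] (mod m)" using m by (simp add: cong_0_iff zdvd_not_zless)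
  moreover have "QuadRes m 1" unfolding QuadRes_def by (rule exI[of _ 1]) simp
  ultimately show ?thesis by (simp add: Legendre_def)
qed

theorem theorem11:
  fixes p q j k :: nat
  assumes "prime p" "odd p" "prime q" "q = p + 2"
    and "j < q" "k < p"
  shows "zak p q (golomb p q) j k =
    (let \<alpha> = golomb_alpha p q in
     if j = 0 \<and> k = 0 then 1 - \<alpha> + \<alpha> * of_nat q
     else if j = 0 then (1 - \<alpha>) * of_nat (q + 1) / 2 + \<alpha> * of_nat q
     else if k = 0 then 1 - \<alpha>
     else (1 - \<alpha>) / 2 *
          (1 + c_q q * of_int (Legendre (int p) (int q) * Legendre (int k) (int p)
                                * Legendre (int j) (int q)))
          * exp (- 2 * pi * \<i> * of_nat (inv_mod p q * k * j) / of_nat q))"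
proof -
  note p = assms(1) and q = assms(3)
  have oq: "odd q" using assms(2,4) by simp
  have pq: "p < q" using assms(4) by simp
  have q1: "1 < q" using prime_gt_1_nat[OF q] .
  have q0: "0 < q" using q1 by simp
  have q2: "2 < q" using q1 oq by presburger
  have cop: "coprime p q" using p q pq primes_coprime by blast
  define u where "u = inv_mod p q"
  have u: "u < q" "[p * u = 1] (mod q)" using inv_mod_prop[OF cop q1] unfolding u_def by auto
  define \<alpha> where "\<alpha> = golomb_alpha p q"
  define S where "S = (\<Sum>r<q. ee q (int (r*j)))"
  define X where "X = (\<Sum>r<q. mod_jacobi p q (int k + int r * int p) * ee q (int (r*j)))"
  have Z: "zak p q (golomb p q) j k = (1 - \<alpha>) * X + \<alpha> * S"
  proof -
    have "zak p q (golomb p q) j k = (\<Sum>r<q. ((1 - \<alpha>) * mod_jacobi p q (int k + int r * int p) + \<alpha>) * ee q (int (r*j)))"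
      unfolding zak_def golomb_def \<alpha>_def ee_def by simp
    also have "\<dots> = (\<Sum>r<q. (1 - \<alpha>) * (mod_jacobi p q (int k + int r * int p) * ee q (int (r*j))) + \<alpha> * ee q (int (r*j)))"
      by (rule sum.cong[OF refl]) (simp add: algebra_simps)
    also have "\<dots> = (1 - \<alpha>) * X + \<alpha> * S"
      unfolding X_def S_def sum.distrib sum_distrib_left ..
    finally show ?thesis .
  qed
  have S: "S = (if j = 0 then of_nat q else 0)"
  proof (cases "j = 0")
    case True then show ?thesis unfolding S_def by simp
  next
    case False
    have "\<not> int q dvd int j" using False assms(5) by (auto dest: dvd_imp_le)
    then have "(\<Sum>r<q. ee q (int j * int r)) = 0" by (rule sum_ee_0[OF q1])
    then show ?thesis unfolding S_def using False by (simp add: mult.commute)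
  qed
  have Qv: "Qs q = c_q q" using Qs_val[OF oq q1] unfolding c_q_def by simp
  show ?thesis
  proof (cases "k = 0")
    case True
    have X1: "X = 1" unfolding X_def True using X_k0[OF p q pq, of j] by simp
    show ?thesis unfolding Z X1 S \<alpha>_def[symmetric] Let_def using True by simp
  next
    case False
    then have k0: "0 < k" by simp
    define E where "E = ee q (- int (u*k*j))"
    define G where "G = (\<Sum>m<q. of_int (Legendre (int m) (int q)) * ee q (int (u*j) * int m))"
    define Lk where "Lk = (of_int (Legendre (int k) (int p)) :: complex)"
    have X: "X = S / 2 + Lk / 2 * E * G + E / 2"
      unfolding X_def S_def E_def G_def Lk_def by (rule X_k[OF p q oq pq k0 assms(6) u(2)])
    show ?thesis
    proof (cases "j = 0")
      case True
      have E1: "E = 1" unfolding E_def True by simp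
      have G0: "G = 0" unfolding G_def True using Leg_sum_0[OF q oq] by simp
      show ?thesis unfolding Z X E1 G0 S \<alpha>_def[symmetric] Let_def using True False
        by (simp add: field_simps)
    next
      case jn: False
      have nu: "\<not> q dvd u"
      proof
        assume "q dvd u"
        then have "[p * u = 0] (mod q)" by (simp add: cong_0_iff)
        then have "[1 = 0] (mod q)" using u(2) by (meson cong_sym cong_trans)
        then show False using q1 by (simp add: cong_0_iff)
      qed
      have nj: "\<not> q dvd j" using jn assms(5) by (auto dest: dvd_imp_le)
      have nuj: "\<not> q dvd u * j" using nu nj q by (simp add: prime_dvd_mult_iff)
      have G: "G = of_int (Legendre (int (u*j)) (int q)) * Qs q" unfolding G_def by (rule Ga[OF q oq nuj])
      have Lu: "Legendre (int u) (int q) = Legendre (int p) (int q)"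
      proof -
        have c: "[int p * int u = 1] (mod int q)" using u(2) by (metis cong_int_iff of_nat_1 of_nat_mult)
        have "Legendre (int p) (int q) * Legendre (int u) (int q) = 1"
          using Leg_mult[OF q q2, of "int p" "int u"] Leg_cong[OF c] Leg_one[of "int q"] q1 by simp
        moreover have "Legendre (int p) (int q) * Legendre (int p) (int q) = 1"
          using Leg_sq1[of "int q" "int p"] cop q1
          by (metis int_dvd_int_iff coprime_commute coprime_absorb_left nat_dvd_1_iff_1 less_irrefl)
        ultimately show ?thesis by (metis mult.assoc mult.commute mult_1)
      qed
      have Luj: "Legendre (int (u*j)) (int q) = Legendre (int p) (int q) * Legendre (int j) (int q)"
        using Leg_mult[OF q q2, of "int u" "int j"] Lu by simp
      have Eexp: "exp (- 2 * pi * \<i> * of_nat (inv_mod p q * k * j) / of_nat q) = E"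
        unfolding E_def ee_def u_def by (simp add: algebra_simps)
      show ?thesis unfolding Z X G Luj Qv S Let_def \<alpha>_def[symmetric] Eexp Lk_def using jn False
        by (simp add: field_simps)
    qed
  qed
qed

end
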